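(* Let $0<\beta<1$, $T>0$, $n_T$ a positive integer, $\tau=T/n_T$, $t_k=k\tau$. Let $\varpi_j$ be defined by $(1-z)^\beta=\sum_{j\ge0}\varpi_j z^j$, $\varrho_j$ by $(1-z)^{-\beta}=\sum_{j\ge0}\varrho_jz^j$, and $P_j:=\tau^\beta\varrho_j$. For a sequence $w^0,\dots,w^{n_T}$ define $D_\tau^{(\beta)}w^k=\tau^{-\beta}\sum_{j=0}^k\varpi_{k-j}(w^j-w^0)$, and for $\theta\in[0,1]$ set $w^{k-\theta}=(1-\theta)w^k+\theta w^{k-1}$ ($k\ge1$). Let $0\le\theta\le1$, and let $\{g^k\}_{k=0}^{n_T}$ and $\{\lambda_l\}_{l=0}^{n_T-1}$ be given non-negative sequences. Assume there is a constant $\lambda$ (independent of the time step size) with $\lambda\ge\sum_{l=0}^{k-1}\lambda_l$ for $1\le k\le n_T$, and that $$\tau\le \frac{1}{\sqrt[\beta]{2\lambda(1+\beta)}}.$$ Then for any non-negative sequence $\{v^k\}_{k=0}^{n_T}$ satisfying $$D_\tau^{(\beta)}(v^k)^2\le\sum_{l=1}^k\lambda_{k-l}(v^l)^2+v^{k-\theta}g^{k-\theta},\qquad 1\le k\le n_T,$$ (where $D_\tau^{(\beta)}(v^k)^2=\tau^{-\beta}\sum_{j=0}^k\varpi_{k-j}((v^j)^2-(v^0)^2)$) it holds that $$v^k\le 2E_\beta(2\lambda t_k^\beta)\Big(v^0+\max_{1\le m\le k}\sum_{j=1}^mP_{m-j}\,g^{j-\theta}\Big),\qquad 1\le k\le n_T,$$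 where $E_\beta(z)=\sum_{l=0}^\infty\frac{z^l}{\Gamma(1+l\beta)}$. *)

theory Defs
  imports "HOL-Analysis.Analysis"
begin

definition varpi :: "real \<Rightarrow> nat \<Rightarrow> real" where
  "varpi \<beta> j = (-1) ^ j * (\<beta> gchoose j)"

definition varrho :: "real \<Rightarrow> nat \<Rightarrow> real" where
  "varrho \<beta> j = (-1) ^ j * ((- \<beta>) gchoose j)"

definition Pcoef :: "real \<Rightarrow> real \<Rightarrow> nat \<Rightarrow> real" where
  "Pcoef \<beta> \<tau> j = \<tau> powr \<beta> * varrho \<beta> j"

definition Dtau :: "real \<Rightarrow> real \<Rightarrow> (nat \<Rightarrow> real) \<Rightarrow> nat \<Rightarrow> real" where
  "Dtau \<beta> \<tau> w k = \<tau> powr (- \<beta>) * (\<Sum>j=0..k. varpi \<beta> (k - j) * (w j - w 0))"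

definition wshift :: "real \<Rightarrow> (nat \<Rightarrow> real) \<Rightarrow> nat \<Rightarrow> real" where
  "wshift \<theta> w k = (1 - \<theta>) * w k + \<theta> * w (k - 1)"

definition mittag_leffler :: "real \<Rightarrow> real \<Rightarrow> real" where
  "mittag_leffler \<beta> z = (\<Sum>l. z ^ l / Gamma (1 + real l * \<beta>))"

end

theory Submission
  imports Defs
begin


lemma varrho_pochhammer: "varrho b j = pochhammer b j / fact j"
  unfolding varrho_def gbinomial_pochhammer
  by (simp flip: power_mult_distrib)

lemma varrho_nonneg: "0 < b \<Longrightarrow> 0 \<le> varrho b j"
  unfolding varrho_pochhammer by (simp add: pochhammer_nonneg)

lemma varrho_Gamma:
  assumes "0 < b" shows "varrho b j = Gamma (b + of_nat j) / (Gamma b * fact j)"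
proof -
  have "b \<notin> \<int>\<^sub>\<le>\<^sub>0" using assms by (auto elim!: nonpos_Ints_cases)
  then show ?thesis unfolding varrho_pochhammer by (simp add: pochhammer_Gamma)
qed

lemma Gamma_wendel:
  fixes y s :: real
  assumes y: "0 < y" and s: "0 \<le> s" "s \<le> 1"
  shows "Gamma (y + s) \<le> y powr s * Gamma y"
proof -
  have "(ln \<circ> Gamma) ((1 - s) *\<^sub>R y + s *\<^sub>R (y + 1)) \<le> (1 - s) * (ln \<circ> Gamma) y + s * (ln \<circ> Gamma) (y + 1)"
    by (rule convex_onD[OF log_convex_Gamma_real]) (use y s in auto)
  moreover have "(1 - s) *\<^sub>R y + s *\<^sub>R (y + 1) = y + s" by (simp add: algebra_simps)
  moreover have "y \<notin> \<int>\<^sub>\<le>\<^sub>0" using y by (auto elim!: nonpos_Ints_cases)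
  then have "Gamma (y + 1) = y * Gamma y" by (rule Gamma_plus1)
  ultimately have "ln (Gamma (y + s)) \<le> (1 - s) * ln (Gamma y) + s * ln (y * Gamma y)" by simp
  also have "\<dots> = ln (y powr s * Gamma y)"
    using y by (simp add: ln_mult ln_powr algebra_simps)
  finally show ?thesis using y s
    by (subst (asm) ln_le_cancel_iff) (auto intro!: Gamma_real_pos add_pos_nonneg)
qed

lemma powr_diff_lower:
  fixes b :: real and m :: nat
  assumes b: "0 < b" "b < 1" and m: "1 \<le> m"
  shows "b * real m powr (b - 1) \<le> real m powr b - (real m - 1) powr b"
proof (cases "m = 1")
  case True then show ?thesis using b by simp
next
  case False
  then have m2: "2 \<le> real m" using m by simp
  have "\<exists>z. real m - 1 < z \<and> z < real m \<and> (\<lambda>x. x powr b) (real m) - (\<lambda>x. x powr b) (real m - 1) = (real m - (real m - 1)) * (b * z powr (b - 1))"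
    by (rule MVT2) (use m2 in \<open>auto intro!: has_real_derivative_powr\<close>)
  then obtain z where z: "real m - 1 < z" "z < real m" "real m powr b - (real m - 1) powr b = b * z powr (b - 1)"
    by auto
  have "real m powr (b - 1) \<le> z powr (b - 1)"
    using z m2 b by (intro powr_mono2') auto
  then show ?thesis using z b by simp
qed

lemma varrho_bound:
  fixes b :: real and m :: nat
  assumes b: "0 < b" "b < 1" and m: "1 \<le> m"
  shows "varrho b m \<le> (real m powr b - (real m - 1) powr b) / (b * Gamma b)"
proof -
  have gm: "Gamma (real m) = fact (m - 1)"
    using Gamma_fact[of "m - 1", where 'a = real] m by (simp add: of_nat_diff)
  have fm: "(fact m :: real) = real m * fact (m - 1)"
    using m fact_reduce[of m, where 'a=real] by simp
  have "varrho b m = Gamma (real m + b) / (Gamma b * fact m)"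
    using varrho_Gamma[OF b(1)] by (simp add: add.commute)
  also have "\<dots> \<le> real m powr b * Gamma (real m) / (Gamma b * fact m)"
    using Gamma_wendel[of "real m" b] b m
    by (intro divide_right_mono) (auto intro!: mult_nonneg_nonneg less_imp_le[OF Gamma_real_pos])
  also have "\<dots> = real m powr (b - 1) / Gamma b"
    using m by (simp add: gm fm powr_diff field_simps)
  also have "\<dots> \<le> (real m powr b - (real m - 1) powr b) / (b * Gamma b)"
  proof -
    have g: "0 < b * Gamma b" using b by simp
    have "real m powr (b - 1) / Gamma b = (b * real m powr (b - 1)) / (b * Gamma b)"
      using b by simp
    also have "\<dots> \<le> (real m powr b - (real m - 1) powr b) / (b * Gamma b)"
      by (intro divide_right_mono powr_diff_lower[OF b m]) (use g in simp)
    finally show ?thesis .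
  qed
  finally show ?thesis .
qed



lemma piece_lower:
  fixes b g x y c :: real
  assumes b: "0 < b" and g: "0 \<le> g" and xy: "0 \<le> x" "x \<le> y" "y \<le> 1"
    and int: "((\<lambda>t. t powr g * (1 - t) powr (b - 1)) has_integral I) {x..y}"
  shows "x powr g * ((1 - x) powr b - (1 - y) powr b) / b \<le> I"
proof -
  let ?F = "\<lambda>t. - (x powr g * (1 - t) powr b / b)"
  have "((\<lambda>t. x powr g * (1 - t) powr (b - 1)) has_integral ?F y - ?F x) {x..y}"
  proof (rule fundamental_theorem_of_calculus_interior)
    show "continuous_on {x..y} ?F"
      using b xy by (intro continuous_intros continuous_on_powr') auto
    fix t assume t: "t \<in> {x<..<y}"
    then have "t < 1" using xy by auto
    then have "(?F has_real_derivative x powr g * (1 - t) powr (b - 1)) (at t)"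
      using b by (auto intro!: derivative_eq_intros simp: field_simps)
    then show "(?F has_vector_derivative x powr g * (1 - t) powr (b - 1)) (at t)"
      by (simp add: has_real_derivative_iff_has_vector_derivative)
  qed (use xy in auto)
  then have "?F y - ?F x \<le> I"
    by (rule has_integral_le[OF _ int]) (use xy g in \<open>auto intro!: mult_right_mono powr_mono2\<close>)
  then show ?thesis by (simp add: field_simps diff_divide_distrib)
qed

lemma integral_partition:
  fixes f :: "real \<Rightarrow> real" and n :: nat
  assumes n: "0 < n" and fi: "f integrable_on {0..1}"
  shows "m \<le> n \<Longrightarrow> integral {0..real m / n} f = (\<Sum>j<m. integral {real j / n..real (Suc j) / n} f)"
proof (induction m)
  case 0 then show ?case by simp
next
  case (Suc m)
  have "integral {0..real m / n} f + integral {real m / n..real (Suc m) / n} f = integral {0..real (Suc m) / n} f"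
  proof (rule Henstock_Kurzweil_Integration.integral_combine)
    have "real (Suc m) / n \<le> 1" using Suc.prems n by (simp add: field_simps)
    then show "f integrable_on {0..real (Suc m) / n}"
      by (intro integrable_subinterval_real[OF fi]) auto
  qed (use n Suc.prems in \<open>auto simp: field_simps\<close>)
  then show ?case using Suc by simp
qed

lemma beta_sum_scaled:
  fixes b g :: real and n :: nat
  assumes b: "0 < b" and g: "0 \<le> g" and n: "0 < n"
  shows "(\<Sum>j=1..n-1. (real j / n) powr g * ((1 - real j / n) powr b - (1 - real (Suc j) / n) powr b) / b)
          \<le> Beta (g + 1) b"
proof -
  define f where "f = (\<lambda>t::real. t powr g * (1 - t) powr (b - 1))"
  have hB: "(f has_integral Beta (g + 1) b) {0..1}"
    using has_integral_Beta_real[of "g + 1" b] b g by (simp add: f_def)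
  then have fi: "f integrable_on {0..1}" by blast
  have sub: "f integrable_on {real j / n..real (Suc j) / n}" if "j < n" for j
    by (rule integrable_subinterval_real[OF fi]) (use that n in \<open>auto simp: field_simps\<close>)
  have fnn: "0 \<le> f t" for t by (simp add: f_def)
  have "(\<Sum>j=1..n-1. (real j / n) powr g * ((1 - real j / n) powr b - (1 - real (Suc j) / n) powr b) / b)
        \<le> (\<Sum>j=1..n-1. integral {real j / n..real (Suc j) / n} f)"
  proof (intro sum_mono)
    fix j assume j: "j \<in> {1..n-1}"
    show "(real j / n) powr g * ((1 - real j / n) powr b - (1 - real (Suc j) / n) powr b) / b
          \<le> integral {real j / n..real (Suc j) / n} f"
    proof (rule piece_lower[OF b g])
      have "j < n" using j n by auto
      from integrable_integral[OF sub[OF this]]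
      show "((\<lambda>t. t powr g * (1 - t) powr (b - 1)) has_integral integral {real j / n..real (Suc j) / n} f) {real j / n..real (Suc j) / n}"
        by (simp add: f_def)
    qed (use j n in \<open>auto simp: field_simps\<close>)
  qed
  also have "\<dots> \<le> (\<Sum>j<n. integral {real j / n..real (Suc j) / n} f)"
    by (rule sum_mono2) (use n fnn sub in \<open>auto intro!: integral_nonneg\<close>)
  also have "\<dots> = integral {0..real n / n} f"
    using integral_partition[OF n fi, of n] by simp
  also have "\<dots> = Beta (g + 1) b" using n hB by (simp add: integral_unique)
  finally show ?thesis .
qed



lemma star_bound:
  fixes b g :: real and n :: nat
  assumes b: "0 < b" "b < 1" and g: "0 \<le> g" and n: "1 \<le> n"
  shows "(\<Sum>j=1..n-1. varrho b (n - j) * real j powr g) \<le> real n powr (g + b) * Gamma (g + 1) / Gamma (g + 1 + b)"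
proof -
  have Gb: "0 < Gamma b" using b by simp
  have n0: "0 < real n" using n by simp
  have "(\<Sum>j=1..n-1. varrho b (n - j) * real j powr g)
      \<le> (\<Sum>j=1..n-1. (real (n - j) powr b - (real (n - j) - 1) powr b) / (b * Gamma b) * real j powr g)"
    by (intro sum_mono mult_right_mono varrho_bound b) auto
  also have "\<dots> = (\<Sum>j=1..n-1. real n powr (g + b) / Gamma b *
        ((real j / n) powr g * ((1 - real j / n) powr b - (1 - real (Suc j) / n) powr b) / b))"
  proof (intro sum.cong refl)
    fix j assume j: "j \<in> {1..n-1}"
    then have jn: "j < n" using n by auto
    have e1: "(real j / n) powr g = real j powr g / real n powr g"
      by (simp add: powr_divide)
    have e2: "(1 - real j / n) powr b = real (n - j) powr b / real n powr b"
    proof -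
      have "1 - real j / n = real (n - j) / n" using jn n0 by (simp add: field_simps of_nat_diff)
      then show ?thesis by (simp add: powr_divide)
    qed
    have e3: "(1 - real (Suc j) / n) powr b = (real (n - j) - 1) powr b / real n powr b"
    proof -
      have "1 - real (Suc j) / n = (real (n - j) - 1) / n" using jn n0 by (simp add: field_simps of_nat_diff)
      moreover have "0 \<le> real (n - j) - 1" using jn by simp
      ultimately show ?thesis by (simp add: powr_divide)
    qed
    have pn: "0 < real n powr g" "0 < real n powr b" using n0 by auto
    show "(real (n - j) powr b - (real (n - j) - 1) powr b) / (b * Gamma b) * real j powr g =
        real n powr (g + b) / Gamma b *
        ((real j / n) powr g * ((1 - real j / n) powr b - (1 - real (Suc j) / n) powr b) / b)"
    proof -
      have gen: "(A - B) / (b * G) * J = (P * Q) / G * ((J / P) * (A / Q - B / Q) / b)"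
        if "0 < P" "0 < Q" "0 < G" "0 < b" for A B J P Q G :: real
        using that by (simp add: field_simps)
      show ?thesis unfolding e1 e2 e3 powr_add by (rule gen) (use pn Gb b in auto)
    qed
  qed
  also have "\<dots> = real n powr (g + b) / Gamma b *
        (\<Sum>j=1..n-1. (real j / n) powr g * ((1 - real j / n) powr b - (1 - real (Suc j) / n) powr b) / b)"
    by (simp add: sum_distrib_left)
  also have "\<dots> \<le> real n powr (g + b) / Gamma b * Beta (g + 1) b"
    by (intro mult_left_mono beta_sum_scaled) (use b g n Gb in auto)
  also have "\<dots> = real n powr (g + b) * Gamma (g + 1) / Gamma (g + 1 + b)"
    using Gb by (simp add: Beta_def field_simps)
  finally show ?thesis .
qed



lemma gpos: "0 \<le> b \<Longrightarrow> 0 < Gamma (1 + real n * (b::real))"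
  by (intro Gamma_real_pos add_pos_nonneg) auto

lemma ml_summable:
  fixes b z :: real
  assumes b: "0 < b" "b < 1" and z: "0 \<le> z"
  shows "summable (\<lambda>l. z ^ l / Gamma (1 + real l * b))"
proof -
  obtain N :: nat where N: "(4 * z) powr (1 / b) / b < real N" using reals_Archimedean2 by blast
  show ?thesis
  proof (rule summable_ratio_test[of "1/2" N])
    fix l assume l: "N \<le> l"
    define x where "x = 1 + real l * b"
    have x1: "1 \<le> x" using b by (simp add: x_def)
    have "(4 * z) powr (1 / b) < real N * b" using N b by (simp add: field_simps)
    also have "\<dots> \<le> x"
    proof -
      have "real N * b \<le> real l * b" using l b by (intro mult_right_mono) auto
      then show ?thesis by (simp add: x_def)
    qed
    finally have "(4 * z) powr (1 / b) \<le> x" by simp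
    then have "((4 * z) powr (1 / b)) powr b \<le> x powr b"
      using b by (intro powr_mono2) auto
    then have hx: "4 * z \<le> x powr b" using b z by (simp add: powr_powr)
    have gx: "0 < Gamma x" "0 < Gamma (x + b)" using x1 b by auto
    have "x \<notin> \<int>\<^sub>\<le>\<^sub>0" using x1 by (auto elim!: nonpos_Ints_cases)
    then have "x * Gamma x = Gamma (x + 1)" by (simp add: Gamma_plus1)
    also have "\<dots> = Gamma ((x + b) + (1 - b))" by simp
    also have "\<dots> \<le> (x + b) powr (1 - b) * Gamma (x + b)"
      by (rule Gamma_wendel) (use x1 b in auto)
    also have "(x + b) powr (1 - b) \<le> (2 * x) powr (1 - b)"
      using x1 b by (intro powr_mono2) auto
    also have "(2 * x) powr (1 - b) = 2 powr (1 - b) * x powr (1 - b)"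
      using x1 by (simp add: powr_mult)
    also have "2 powr (1 - b) \<le> (2::real) powr 1"
      using b by (intro powr_mono) auto
    finally have "x * Gamma x \<le> 2 * x powr (1 - b) * Gamma (x + b)"
      using gx x1 by (simp add: mult_right_mono)
    moreover have "x = x powr b * x powr (1 - b)" using x1 by (simp flip: powr_add)
    ultimately have "x powr b * x powr (1 - b) * Gamma x \<le> 2 * x powr (1 - b) * Gamma (x + b)" by simp
    then have "x powr b * Gamma x \<le> 2 * Gamma (x + b)"
      using x1 by (simp add: mult.assoc mult.left_commute[of "x powr (1-b)"])
    then have key: "4 * z * Gamma x \<le> 2 * Gamma (x + b)"
      using hx gx by (meson dual_order.trans less_imp_le mult_right_mono)
    have "norm (z ^ Suc l / Gamma (1 + real (Suc l) * b)) = z ^ l * z / Gamma (x + b)"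
      using z gx by (simp add: x_def algebra_simps)
    also have "\<dots> \<le> z ^ l * (1 / 2) / Gamma x"
    proof -
      have "z / Gamma (x + b) \<le> (1/2) / Gamma x"
        using key gx by (simp add: field_simps)
      then show ?thesis using z by (simp add: mult_left_mono times_divide_eq_right[symmetric] del: times_divide_eq_right)
    qed
    also have "\<dots> = 1 / 2 * norm (z ^ l / Gamma (1 + real l * b))"
      using z gx by (simp add: x_def)
    finally show "norm (z ^ Suc l / Gamma (1 + real (Suc l) * b)) \<le> 1 / 2 * norm (z ^ l / Gamma (1 + real l * b))" .
  qed simp
qed

lemma ml_ge1:
  fixes b z :: real
  assumes b: "0 < b" "b < 1" and z: "0 \<le> z"
  shows "1 \<le> mittag_leffler b z"
proof -
  have "sum (\<lambda>l. z ^ l / Gamma (1 + real l * b)) {0} \<le> (\<Sum>l. z ^ l / Gamma (1 + real l * b))"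
    by (rule sum_le_suminf[OF ml_summable[OF b z]]) (use z b gpos[of b] in \<open>auto intro!: divide_nonneg_pos\<close>)
  then show ?thesis by (simp add: mittag_leffler_def)
qed

lemma ml_mono:
  fixes b z z' :: real
  assumes b: "0 < b" "b < 1" and z: "0 \<le> z" "z \<le> z'"
  shows "mittag_leffler b z \<le> mittag_leffler b z'"
  unfolding mittag_leffler_def
  by (rule suminf_le[OF _ ml_summable[OF b z(1)] ml_summable[OF b]])
     (use z b in \<open>auto intro!: divide_right_mono power_mono less_imp_le[OF gpos]\<close>)



lemma key_ml:
  fixes b c :: real and n :: nat
  assumes b: "0 < b" "b < 1" and c: "0 \<le> c" and n: "1 \<le> n"
  shows "1 + c * (\<Sum>j=1..n-1. varrho b (n - j) * mittag_leffler b (c * real j powr b))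
         \<le> mittag_leffler b (c * real n powr b)"
proof -
  define T where "T = (\<lambda>x::nat. \<lambda>l::nat. (c * real x powr b) ^ l / Gamma (1 + real l * b))"
  have sT: "summable (T x)" for x
    unfolding T_def by (rule ml_summable[OF b]) (use c in auto)
  have mlT: "mittag_leffler b (c * real x powr b) = suminf (T x)" for x
    by (simp add: mittag_leffler_def T_def)
  have Tpow: "T x l = c ^ l * real x powr (real l * b) / Gamma (1 + real l * b)" if "1 \<le> x" for x l
    using that by (simp add: T_def power_mult_distrib powr_power)
  have gp: "0 < Gamma (1 + real l * b)" for l using gpos[of b l] b by simp
  have "(\<Sum>j=1..n-1. varrho b (n - j) * suminf (T j)) = (\<Sum>j=1..n-1. \<Sum>l. varrho b (n - j) * T j l)"
    by (intro sum.cong refl) (simp add: suminf_mult[OF sT])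
  also have "\<dots> = (\<Sum>l. \<Sum>j=1..n-1. varrho b (n - j) * T j l)"
    by (rule suminf_sum[symmetric]) (intro summable_mult sT)
  finally have e1: "(\<Sum>j=1..n-1. varrho b (n - j) * suminf (T j)) = (\<Sum>l. \<Sum>j=1..n-1. varrho b (n - j) * T j l)" .
  have s1: "summable (\<lambda>l. \<Sum>j=1..n-1. varrho b (n - j) * T j l)"
    by (intro summable_sum summable_mult sT)
  have hterm: "c * (\<Sum>j=1..n-1. varrho b (n - j) * T j l) \<le> T n (Suc l)" for l
  proof -
    have "(\<Sum>j=1..n-1. varrho b (n - j) * T j l)
        = c ^ l / Gamma (1 + real l * b) * (\<Sum>j=1..n-1. varrho b (n - j) * real j powr (real l * b))"
      by (simp add: sum_distrib_left Tpow) (intro sum.cong refl, simp)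
    also have "\<dots> \<le> c ^ l / Gamma (1 + real l * b) * (real n powr (real l * b + b) * Gamma (real l * b + 1) / Gamma (real l * b + 1 + b))"
      by (intro mult_left_mono star_bound b n) (use b c gp[of l] in auto)
    also have "\<dots> = c ^ l * real n powr (real l * b + b) / Gamma (real l * b + 1 + b)"
      using gp[of l] by (simp add: field_simps)
    finally have "c * (\<Sum>j=1..n-1. varrho b (n - j) * T j l) \<le> c * (c ^ l * real n powr (real l * b + b) / Gamma (real l * b + 1 + b))"
      using c by (rule mult_left_mono)
    also have "\<dots> = T n (Suc l)"
      using n by (simp add: Tpow algebra_simps)
    finally show ?thesis .
  qed
  have "c * (\<Sum>j=1..n-1. varrho b (n - j) * mittag_leffler b (c * real j powr b))
      = (\<Sum>l. c * (\<Sum>j=1..n-1. varrho b (n - j) * T j l))"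
    by (simp only: mlT e1 suminf_mult[OF s1])
  also have "\<dots> \<le> (\<Sum>l. T n (Suc l))"
    by (rule suminf_le[OF hterm]) (use s1 sT in \<open>auto intro: summable_mult simp: summable_Suc_iff\<close>)
  also have "\<dots> = suminf (T n) - 1"
    by (simp only: suminf_split_head[OF sT]) (simp add: T_def)
  finally show ?thesis by (simp add: mlT)
qed



lemma varrho0 [simp]: "varrho b 0 = 1" by (simp add: varrho_def)

lemma conv_id: "(\<Sum>k=0..N. varpi b k * varrho b (N - k)) = (if N = 0 then 1 else 0)"
proof -
  have "(\<Sum>k=0..N. varpi b k * varrho b (N - k)) = (\<Sum>k=0..N. (-1)^N * ((b gchoose k) * ((-b) gchoose (N-k))))"
    by (intro sum.cong refl) (auto simp: varpi_def varrho_def power_add[symmetric])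
  also have "\<dots> = (-1)^N * ((b + -b) gchoose N)"
    by (simp add: sum_distrib_left[symmetric] gbinomial_Vandermonde)
  finally show ?thesis by (cases N) (auto)
qed

lemma inner_conv:
  assumes "i \<le> m"
  shows "(\<Sum>j=i..m. varrho b (m - j) * varpi b (j - i)) = (if i = m then 1 else 0)"
proof -
  have "(\<Sum>j=i..m. varrho b (m - j) * varpi b (j - i)) = (\<Sum>k=0..m-i. varrho b (m - (i + k)) * varpi b k)"
    by (subst sum.atLeastAtMost_shift_0[OF assms]) (simp add: comp_def)
  also have "\<dots> = (\<Sum>k=0..m-i. varpi b k * varrho b ((m - i) - k))"
    by (intro sum.cong refl) (simp add: mult.commute diff_diff_left)
  also have "\<dots> = (if i = m then 1 else 0)"
    by (simp only: conv_id) (use assms in auto)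
  finally show ?thesis .
qed

lemma conv_telescope:
  "(\<Sum>j=1..m. varrho b (m - j) * (\<Sum>i=0..j. varpi b (j - i) * (w i - w 0))) = w m - (w 0 :: real)"
proof -
  have "(\<Sum>j=1..m. varrho b (m - j) * (\<Sum>i=0..j. varpi b (j - i) * (w i - w 0)))
      = (\<Sum>j=0..m. varrho b (m - j) * (\<Sum>i=0..j. varpi b (j - i) * (w i - w 0)))"
    by (simp add: sum.atLeast_Suc_atMost[of 0 m] One_nat_def)
  also have "\<dots> = (\<Sum>j=0..m. \<Sum>i=0..m. (if i \<le> j then varrho b (m - j) * varpi b (j - i) * (w i - w 0) else 0))"
  proof (intro sum.cong refl)
    fix j assume j: "j \<in> {0..m}"
    have "(\<Sum>i=0..m. (if i \<le> j then varrho b (m - j) * varpi b (j - i) * (w i - w 0) else 0))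
        = (\<Sum>i\<in>{i\<in>{0..m}. i \<le> j}. varrho b (m - j) * varpi b (j - i) * (w i - w 0))"
      by (rule sum.inter_filter[symmetric]) simp
    also have "{i\<in>{0..m}. i \<le> j} = {0..j}" using j by auto
    finally show "varrho b (m - j) * (\<Sum>i=0..j. varpi b (j - i) * (w i - w 0)) =
        (\<Sum>i=0..m. (if i \<le> j then varrho b (m - j) * varpi b (j - i) * (w i - w 0) else 0))"
      by (simp add: sum_distrib_left mult.assoc)
  qed
  also have "\<dots> = (\<Sum>i=0..m. \<Sum>j=0..m. (if i \<le> j then varrho b (m - j) * varpi b (j - i) * (w i - w 0) else 0))"
    by (rule sum.swap)
  also have "\<dots> = (\<Sum>i=0..m. (w i - w 0) * (if i = m then 1 else 0))"
  proof (intro sum.cong refl)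
    fix i assume i: "i \<in> {0..m}"
    have "(\<Sum>j=0..m. (if i \<le> j then varrho b (m - j) * varpi b (j - i) * (w i - w 0) else 0))
        = (\<Sum>j\<in>{j\<in>{0..m}. i \<le> j}. varrho b (m - j) * varpi b (j - i) * (w i - w 0))"
      by (rule sum.inter_filter[symmetric]) simp
    also have "{j\<in>{0..m}. i \<le> j} = {i..m}" using i by auto
    also have "(\<Sum>j=i..m. varrho b (m - j) * varpi b (j - i) * (w i - w 0))
        = (w i - w 0) * (\<Sum>j=i..m. varrho b (m - j) * varpi b (j - i))"
      by (simp add: sum_distrib_left mult_ac)
    also have "\<dots> = (w i - w 0) * (if i = m then 1 else 0)"
      using i by (simp add: inner_conv)
    finally show "(\<Sum>j=0..m. (if i \<le> j then varrho b (m - j) * varpi b (j - i) * (w i - w 0) else 0))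
        = (w i - w 0) * (if i = m then 1 else 0)" .
  qed
  also have "\<dots> = w m - w 0"
    by (simp add: if_distrib cong: if_cong)
  finally show ?thesis .
qed



lemma volterra:
  fixes b \<tau> :: real and u R :: "nat \<Rightarrow> real"
  assumes tau: "0 < \<tau>" and b: "0 < b"
    and h: "\<And>j. 1 \<le> j \<Longrightarrow> j \<le> m \<Longrightarrow> Dtau b \<tau> u j \<le> R j"
  shows "u m - u 0 \<le> (\<Sum>j=1..m. Pcoef b \<tau> (m - j) * R j)"
proof -
  have "(\<Sum>j=1..m. Pcoef b \<tau> (m - j) * Dtau b \<tau> u j)
      = (\<Sum>j=1..m. varrho b (m - j) * (\<Sum>i=0..j. varpi b (j - i) * (u i - u 0)))"
  proof (intro sum.cong refl)
    fix j
    have "\<tau> powr b * \<tau> powr (- b) = 1" using tau by (simp flip: powr_add)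
    then show "Pcoef b \<tau> (m - j) * Dtau b \<tau> u j = varrho b (m - j) * (\<Sum>i=0..j. varpi b (j - i) * (u i - u 0))"
      unfolding Pcoef_def Dtau_def
      by (metis (no_types, lifting) mult.assoc mult.commute mult.left_commute mult_1)
  qed
  also have "\<dots> = u m - u 0" by (rule conv_telescope)
  finally have eq: "(\<Sum>j=1..m. Pcoef b \<tau> (m - j) * Dtau b \<tau> u j) = u m - u 0" .
  have "(\<Sum>j=1..m. Pcoef b \<tau> (m - j) * Dtau b \<tau> u j) \<le> (\<Sum>j=1..m. Pcoef b \<tau> (m - j) * R j)"
    by (intro sum_mono mult_left_mono h) (use tau b in \<open>auto simp: Pcoef_def intro!: mult_nonneg_nonneg varrho_nonneg\<close>)
  then show ?thesis using eq by simp
qed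

lemma sum_rev_lam:
  "(\<Sum>l=1..j. (f :: nat \<Rightarrow> real) (j - l)) = (\<Sum>i<j. f i)"
  by (rule sum.reindex_bij_witness[of _ "\<lambda>i. j - i" "\<lambda>l. j - l"]) auto



theorem theorem2p1:
  fixes \<beta> T \<theta> \<Lambda> :: real and nT :: nat
    and g lam v :: "nat \<Rightarrow> real"
  defines "\<tau> \<equiv> T / real nT"
  assumes hbeta: "0 < \<beta>" "\<beta> < 1"
    and hT: "0 < T"
    and hnT: "0 < nT"
    and htheta: "0 \<le> \<theta>" "\<theta> \<le> 1"
    and hg: "\<And>k. k \<le> nT \<Longrightarrow> 0 \<le> g k"
    and hlam: "\<And>l. l < nT \<Longrightarrow> 0 \<le> lam l"
    and hLam: "\<And>k. 1 \<le> k \<Longrightarrow> k \<le> nT \<Longrightarrow> (\<Sum>l<k. lam l) \<le> \<Lambda>"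
    and hstep: "\<tau> powr \<beta> * (2 * \<Lambda> * (1 + \<beta>)) \<le> 1"
    and hv: "\<And>k. k \<le> nT \<Longrightarrow> 0 \<le> v k"
    and hineq: "\<And>k. 1 \<le> k \<Longrightarrow> k \<le> nT \<Longrightarrow>
        Dtau \<beta> \<tau> (\<lambda>j. (v j)\<^sup>2) k
          \<le> (\<Sum>l=1..k. lam (k - l) * (v l)\<^sup>2) + wshift \<theta> v k * wshift \<theta> g k"
  shows "\<And>k. 1 \<le> k \<Longrightarrow> k \<le> nT \<Longrightarrow>
    v k \<le> 2 * mittag_leffler \<beta> (2 * \<Lambda> * (real k * \<tau>) powr \<beta>)
       * (v 0 + Max ((\<lambda>m. \<Sum>j=1..m. Pcoef \<beta> \<tau> (m - j) * wshift \<theta> g j) ` {1..k}))"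
proof -
  fix k :: nat assume k1: "1 \<le> k" and kn: "k \<le> nT"
  have tau: "0 < \<tau>" using hT hnT by (simp add: \<tau>_def)
  define a where "a = \<tau> powr \<beta>"
  have a: "0 < a" using tau by (simp add: a_def)
  have Lam0: "0 \<le> \<Lambda>"
  proof -
    have "(\<Sum>l<1. lam l) \<le> \<Lambda>" using hLam[of 1] hnT by simp
    then show ?thesis using hlam[of 0] hnT by simp
  qed
  define c where "c = 2 * a * \<Lambda>"
  define \<mu> where "\<mu> = a * \<Lambda>"
  have c0: "0 \<le> c" using a Lam0 by (simp add: c_def)
  have c1: "c \<le> 1"
  proof -
    have "c * (1 + \<beta>) \<le> 1" using hstep by (simp add: c_def a_def algebra_simps)
    moreover have "c \<le> c * (1 + \<beta>)" using c0 hbeta by (simp add: algebra_simps)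
    ultimately show ?thesis by linarith
  qed
  have mu: "0 \<le> \<mu>" "\<mu> \<le> 1/2" "c = 2 * \<mu>" using c0 c1 by (auto simp: c_def \<mu>_def mult.commute)
  define E where "E = (\<lambda>n::nat. mittag_leffler \<beta> (c * real n powr \<beta>))"
  have E1: "1 \<le> E n" for n unfolding E_def by (rule ml_ge1[OF hbeta]) (use c0 in auto)
  have Emono: "E j \<le> E n" if "j \<le> n" for j n
    unfolding E_def by (rule ml_mono[OF hbeta]) (use c0 that hbeta in \<open>auto intro!: mult_left_mono powr_mono2\<close>)
  define u where "u = (\<lambda>n. (v n)\<^sup>2)"
  define wg where "wg = wshift \<theta> g"
  define wv where "wv = wshift \<theta> v"
  define Gs where "Gs = (\<lambda>m. \<Sum>j=1..m. Pcoef \<beta> \<tau> (m - j) * wshift \<theta> g j)"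
  define G where "G = Max (Gs ` {1..k})"
  define M where "M = Max (v ` {0..k})"
  have P0: "0 \<le> Pcoef \<beta> \<tau> j" for j
    using a hbeta by (simp add: Pcoef_def a_def[symmetric] varrho_nonneg)
  have wg0: "0 \<le> wg j" if "1 \<le> j" "j \<le> nT" for j
    using that htheta hg[of j] hg[of "j - 1"] by (simp add: wg_def wshift_def)
  have Gs0: "0 \<le> Gs m" if "m \<le> nT" for m
    unfolding Gs_def using that by (intro sum_nonneg mult_nonneg_nonneg P0) (auto simp: wg_def[symmetric] intro!: wg0)
  have GsG: "Gs m \<le> G" if "1 \<le> m" "m \<le> k" for m
    unfolding G_def using that by (intro Max_ge) auto
  have G0: "0 \<le> G" using GsG[OF k1 order.refl] Gs0[OF kn] by simp
  have vM: "v j \<le> M" if "j \<le> k" for j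
    unfolding M_def using that by (intro Max_ge) auto
  have M0: "0 \<le> M" using vM[of 0] hv[of 0] by simp
  define F where "F = v 0 + G"
  have F0: "0 \<le> F" using hv[of 0] G0 by (simp add: F_def)
  define \<psi> where "\<psi> = M * F"
  have psi0: "0 \<le> \<psi>" using M0 F0 by (simp add: \<psi>_def)
  have wvM: "wv j \<le> M" if "1 \<le> j" "j \<le> k" for j
  proof -
    have "(1 - \<theta>) * v j \<le> (1 - \<theta>) * M" using vM[of j] that htheta by (intro mult_left_mono) auto
    moreover have "\<theta> * v (j - 1) \<le> \<theta> * M" using vM[of "j - 1"] that htheta by (intro mult_left_mono) auto
    ultimately show ?thesis by (simp add: wv_def wshift_def algebra_simps)
  qed
  have u0: "u 0 \<le> M * v 0"
    using vM[of 0] hv[of 0] by (simp add: u_def power2_eq_square mult_right_mono)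
  have unn: "0 \<le> u n" for n by (simp add: u_def)
  define B where "B = (\<lambda>n. 2 * \<psi> * E n)"
  have Bmono: "B j \<le> B n" if "j \<le> n" for j n
    unfolding B_def using Emono[OF that] psi0 by (simp add: mult_left_mono)
  have B0: "0 \<le> B n" for n unfolding B_def using psi0 E1[of n] by simp
  have lamsum: "(\<Sum>l=1..j. lam (j - l)) \<le> \<Lambda>" if "1 \<le> j" "j \<le> nT" for j
    unfolding sum_rev_lam by (rule hLam[OF that])
  have claim: "n \<le> k \<Longrightarrow> u n \<le> B n" for n
  proof (induction n rule: less_induct)
    case (less n)
    show ?case
    proof (cases "n = 0")
      case True
      have "u 0 \<le> \<psi>" using u0 mult_nonneg_nonneg[OF M0 G0] by (simp add: \<psi>_def F_def distrib_left)
      also have "\<psi> \<le> B 0"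
      proof -
        have "\<psi> * 1 \<le> \<psi> * E 0" by (rule mult_left_mono[OF E1 psi0])
        then show ?thesis using psi0 E1[of 0] by (simp add: B_def)
      qed
      finally show ?thesis using True by simp
    next
      case False
      then have n1: "1 \<le> n" by simp
      have nk: "n \<le> k" using less.prems .
      have IH: "u l \<le> B l" if "l < n" for l using less.IH[of l] that nk by simp
      show ?thesis
      proof (rule ccontr)
        assume "\<not> u n \<le> B n"
        then have big: "B n < u n" by simp
        have ul: "u l \<le> u n" if "l \<le> n" for l
        proof (cases "l = n")
          case False
          then have "l < n" using that by simp
          then show ?thesis using IH[of l] Bmono[OF that] big by simp
        qed simp
        define S where "S = (\<lambda>j. \<Sum>l=1..j. lam (j - l) * u l)"
        have V: "u n - u 0 \<le> (\<Sum>j=1..n. Pcoef \<beta> \<tau> (n - j) * (S j + wv j * wg j))"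
          by (rule volterra[OF tau hbeta(1)]) (use hineq nk kn in \<open>auto simp: S_def u_def wv_def wg_def\<close>)
        have sum2: "(\<Sum>j=1..n. Pcoef \<beta> \<tau> (n - j) * (wv j * wg j)) \<le> M * G"
        proof -
          have "(\<Sum>j=1..n. Pcoef \<beta> \<tau> (n - j) * (wv j * wg j)) \<le> (\<Sum>j=1..n. M * (Pcoef \<beta> \<tau> (n - j) * wg j))"
          proof (intro sum_mono)
            fix j assume j: "j \<in> {1..n}"
            have "wv j * wg j \<le> M * wg j"
              using j nk kn by (intro mult_right_mono wvM wg0) auto
            then show "Pcoef \<beta> \<tau> (n - j) * (wv j * wg j) \<le> M * (Pcoef \<beta> \<tau> (n - j) * wg j)"
              using P0[of "n - j"] by (metis mult.left_commute mult_left_mono)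
          qed
          also have "\<dots> = M * Gs n" by (simp add: Gs_def sum_distrib_left wg_def)
          also have "\<dots> \<le> M * G" using GsG[OF n1 nk] M0 by (simp add: mult_left_mono)
          finally show ?thesis .
        qed
        have Sn: "S n \<le> \<Lambda> * u n"
        proof -
          have "S n \<le> (\<Sum>l=1..n. lam (n - l) * u n)"
            unfolding S_def using nk kn by (intro sum_mono mult_left_mono ul hlam) auto
          also have "\<dots> = u n * (\<Sum>l=1..n. lam (n - l))" by (simp add: sum_distrib_left mult_ac)
          also have "\<dots> \<le> u n * \<Lambda>" using lamsum[OF n1] nk kn unn[of n] by (intro mult_left_mono) auto
          finally show ?thesis by (simp add: mult_ac)
        qed
        have Sj: "S j \<le> \<Lambda> * B j" if "1 \<le> j" "j < n" for j
        proof -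
          have "S j \<le> (\<Sum>l=1..j. lam (j - l) * B j)"
            unfolding S_def using that nk kn
            by (intro sum_mono mult_left_mono hlam) (auto intro: order_trans[OF IH Bmono])
          also have "\<dots> = B j * (\<Sum>l=1..j. lam (j - l))" by (simp add: sum_distrib_left mult_ac)
          also have "\<dots> \<le> B j * \<Lambda>" using lamsum[of j] that nk kn B0[of j] by (intro mult_left_mono) auto
          finally show ?thesis by (simp add: mult_ac)
        qed
        obtain n' where n': "n = Suc n'" using n1 by (cases n) auto
        have sum1: "(\<Sum>j=1..n. Pcoef \<beta> \<tau> (n - j) * S j)
            \<le> \<psi> * (c * (\<Sum>j=1..n-1. varrho \<beta> (n - j) * E j)) + \<mu> * u n"
        proof -
          have "(\<Sum>j=1..n. Pcoef \<beta> \<tau> (n - j) * S j) = (\<Sum>j=1..n-1. Pcoef \<beta> \<tau> (n - j) * S j) + a * S n"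
            using n' by (simp add: Pcoef_def a_def)
          also have "(\<Sum>j=1..n-1. Pcoef \<beta> \<tau> (n - j) * S j) \<le> (\<Sum>j=1..n-1. Pcoef \<beta> \<tau> (n - j) * (\<Lambda> * B j))"
            using n1 by (intro sum_mono mult_left_mono Sj P0) auto
          also have "\<dots> = \<psi> * (c * (\<Sum>j=1..n-1. varrho \<beta> (n - j) * E j))"
            by (simp add: sum_distrib_left Pcoef_def a_def[symmetric] B_def c_def mult_ac)
          also have "a * S n \<le> \<mu> * u n" using Sn a by (simp add: \<mu>_def mult.assoc mult_left_mono)
          finally show ?thesis by simp
        qed
        have "u n \<le> u 0 + (\<Sum>j=1..n. Pcoef \<beta> \<tau> (n - j) * S j) + (\<Sum>j=1..n. Pcoef \<beta> \<tau> (n - j) * (wv j * wg j))"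
          using V by (simp add: distrib_left sum.distrib)
        also have "\<dots> \<le> M * v 0 + (\<psi> * (c * (\<Sum>j=1..n-1. varrho \<beta> (n - j) * E j)) + \<mu> * u n) + M * G"
          using u0 sum1 sum2 by linarith
        also have "\<dots> = \<psi> * (1 + c * (\<Sum>j=1..n-1. varrho \<beta> (n - j) * E j)) + \<mu> * u n"
          by (simp add: \<psi>_def F_def algebra_simps)
        also have "\<psi> * (1 + c * (\<Sum>j=1..n-1. varrho \<beta> (n - j) * E j)) \<le> \<psi> * E n"
          unfolding E_def by (intro mult_left_mono key_ml hbeta c0 n1 psi0)
        finally have "u n * (1 - \<mu>) \<le> \<psi> * E n" by (simp add: algebra_simps)
        moreover have "u n / 2 \<le> u n * (1 - \<mu>)" using mult_right_mono[OF mu(2) unn[of n]] by (simp add: algebra_simps)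
        ultimately have "u n \<le> B n" by (simp add: B_def)
        then show False using big by simp
      qed
    qed
  qed
  obtain n0 where n0: "n0 \<in> {0..k}" "v n0 = M"
  proof -
    have "M \<in> v ` {0..k}" unfolding M_def by (rule Max_in) auto
    then show ?thesis using that by blast
  qed
  have "M * M \<le> M * (2 * F * E k)"
  proof -
    have "M * M = u n0" using n0 by (simp add: u_def power2_eq_square)
    also have "\<dots> \<le> B n0" using claim n0 by simp
    also have "\<dots> \<le> B k" using n0 by (intro Bmono) auto
    also have "\<dots> = M * (2 * F * E k)" by (simp add: B_def \<psi>_def mult_ac)
    finally show ?thesis .
  qed
  then have Mle: "M \<le> 2 * F * E k"
    using M0 F0 E1[of k] by (cases "M = 0") (auto simp: mult_le_cancel_left)
  have arg: "2 * \<Lambda> * (real k * \<tau>) powr \<beta> = c * real k powr \<beta>"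
    using tau by (simp add: powr_mult c_def a_def mult_ac)
  have "v k \<le> M" using vM[of k] by simp
  also have "\<dots> \<le> 2 * F * E k" by (rule Mle)
  also have "\<dots> = 2 * mittag_leffler \<beta> (2 * \<Lambda> * (real k * \<tau>) powr \<beta>)
       * (v 0 + Max ((\<lambda>m. \<Sum>j=1..m. Pcoef \<beta> \<tau> (m - j) * wshift \<theta> g j) ` {1..k}))"
    unfolding arg by (simp add: E_def F_def G_def Gs_def)
  finally show "v k \<le> 2 * mittag_leffler \<beta> (2 * \<Lambda> * (real k * \<tau>) powr \<beta>)
       * (v 0 + Max ((\<lambda>m. \<Sum>j=1..m. Pcoef \<beta> \<tau> (m - j) * wshift \<theta> g j) ` {1..k}))" .
qed

end
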